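(* Let $\vec{\mathbf{e}}=(1,0)$, $\vec{\mathbf{f}}=(0,1)$. Let $E,E'$ be two copies of the flat plane $\mathbb{R}^2$. Let $\mathcal{S}$ be the family of marks on $E$ with endpoints $4n\vec{\mathbf{e}},(4n+1)\vec{\mathbf{e}}$ ($n\ge1$), $\mathcal{S}_{\mathrm{glue}}$ the family of marks on $E$ with endpoints $(4n+2)\vec{\mathbf{e}},(4n+3)\vec{\mathbf{e}}$ ($n\ge1$), $\mathcal{S}'$ the family of marks on $E'$ with endpoints $2n\vec{\mathbf{f}},2n\vec{\mathbf{f}}+\vec{\mathbf{e}}$ ($n\ge1$), and $\mathcal{S}'_{\mathrm{glue}}$ the family of marks on $E'$ with endpoints $(2n+1)\vec{\mathbf{f}},(2n+1)\vec{\mathbf{f}}+\vec{\mathbf{e}}$ ($n\ge 1$). Let $\hat{E}$ be the flat surface obtained from $E\sqcup E'$ by regluing along $\mathcal{S}_{\mathrm{glue}}$ and $\mathcal{S}'_{\mathrm{glue}}$; the families $\mathcal{S},\mathcal{S}'$ are inherited by $\hat{E}$. Let $g\in\mathbf{GL}_+(2,\mathbb{R})$ with $\|g\|\ge 1$, and let $\hat{E}_g$ be the surface obtained from $\hat{E}$ by post-composing every chart with $g$, with $\bar g:\hat E\to\hat E_g$ the canonical affine homeomorphism of derivative $g$. Then the distance in $\hat{E}_g$ between $\bar g(\bigcup\mathcal{S})$ and $\bar g(\bigcup\mathcal{S}')$ is at least $\frac{1}{\sqrt{2}}$.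
   Context: $\|g\|$ is the operator norm with respect to the Euclidean norm. A flat surface is a connected Riemann surface with a non-zero holomorphic $1$-form, carrying the induced translation atlas and flat metric. A mark is an oriented finite-length geodesic segment (with endpoints) avoiding singularities; in the plane it is determined by its endpoints, and its slope is its holonomy vector. Regluing along two disjoint marks $m,m'$ of equal slope: cut along $m$ and $m'$, obtaining four boundary segments, and reglue each side of the cut along $m$ to the opposite side of the cut along $m'$ by translation. For two sequences $(m_n),(m'_n)$ of disjoint non-accumulating marks with $m_n,m'_n$ of equal slope, regluing along them means regluing successively along $m_n,m'_n$ for all $n$ (in the limit). Marks disjoint from those used in a regluing are inherited by the resulting surface. Distances are measured in the flat (path) metric. *)

theory Defs
  imports "HOL-Analysis.Analysis"
begin

datatype sheet = SE | SE'

fun other :: "sheet \<Rightarrow> sheet" where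
  "other SE = SE'" | "other SE' = SE"

definition pt :: "real \<Rightarrow> real \<Rightarrow> real^2" where
  "pt a b = vector [a, b]"

definition glue_start :: "sheet \<Rightarrow> nat \<Rightarrow> real^2" where
  "glue_start s n = (case s of SE \<Rightarrow> pt (4 * real n + 2) 0 | SE' \<Rightarrow> pt 0 (2 * real n + 1))"

definition glue_end :: "sheet \<Rightarrow> nat \<Rightarrow> real^2" where
  "glue_end s n = (case s of SE \<Rightarrow> pt (4 * real n + 3) 0 | SE' \<Rightarrow> pt 1 (2 * real n + 1))"

definition glue_height :: "sheet \<Rightarrow> nat \<Rightarrow> real" where
  "glue_height s n = (case s of SE \<Rightarrow> 0 | SE' \<Rightarrow> 2 * real n + 1)"

definition glue_slit :: "sheet \<Rightarrow> nat \<Rightarrow> (real^2) set" where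
  "glue_slit s n = closed_segment (glue_start s n) (glue_end s n)"

definition glue_slit_open :: "sheet \<Rightarrow> nat \<Rightarrow> (real^2) set" where
  "glue_slit_open s n = open_segment (glue_start s n) (glue_end s n)"

text \<open>The translation identifying the n-th glue mark on sheet s with the one on the other sheet.\<close>
definition transfer :: "sheet \<Rightarrow> nat \<Rightarrow> real^2 \<Rightarrow> real^2" where
  "transfer s n p = p - glue_start s n + glue_start (other s) n"

text \<open>A piece of polygonal path: a straight segment from a to b in sheet s,
  of positive length, whose interior does not meet any (closed) glue mark.\<close>
type_synonym piece = "sheet \<times> (real^2) \<times> (real^2)"

definition piece_ok :: "piece \<Rightarrow> bool" where
  "piece_ok c = (let s = fst c; a = fst (snd c); b = snd (snd c) in
      a \<noteq> b \<and> (\<forall>n\<ge>1. open_segment a b \<inter> glue_slit s n = {}))"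

text \<open>How consecutive pieces may be joined in the reglued surface.
  At an endpoint of a glue mark (a cone point): stay, or pass to the identified endpoint
  on the other sheet.
  At an interior point of a glue mark approached from one side: either continue on the same
  side in the same sheet, or cross: the side of the cut along m is glued to the opposite side
  of the cut along m', so one leaves on the opposite side of the partner mark.\<close>
definition link :: "piece \<Rightarrow> piece \<Rightarrow> bool" where
  "link c c' = (let s = fst c; a = fst (snd c); b = snd (snd c);
                    s' = fst c'; a' = fst (snd c'); b' = snd (snd c') in
      ((\<forall>n\<ge>1. b \<notin> glue_slit s n) \<and> s' = s \<and> a' = b)
    \<or> (\<exists>n\<ge>1. b \<in> {glue_start s n, glue_end s n} \<and>
          ((s' = s \<and> a' = b) \<or> (s' = other s \<and> a' = transfer s n b)))
    \<or> (\<exists>n\<ge>1. b \<in> glue_slit_open s n \<and>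
          ((s' = s \<and> a' = b \<and> sgn (b' $ 2 - glue_height s n) = sgn (a $ 2 - glue_height s n))
         \<or> (s' = other s \<and> a' = transfer s n b \<and>
              sgn (b' $ 2 - glue_height s' n) = - sgn (a $ 2 - glue_height s n)))))"

definition admissible :: "piece list \<Rightarrow> sheet \<times> (real^2) \<Rightarrow> sheet \<times> (real^2) \<Rightarrow> bool" where
  "admissible cs x y =
     (cs \<noteq> [] \<and> (\<forall>c\<in>set cs. piece_ok c) \<and>
      (\<forall>i. Suc i < length cs \<longrightarrow> link (cs ! i) (cs ! Suc i)) \<and>
      fst (hd cs) = fst x \<and> fst (snd (hd cs)) = snd x \<and>
      fst (last cs) = fst y \<and> snd (snd (last cs)) = snd y)"

text \<open>Length in the flat metric of \<open>\<hat>E_g\<close> (charts post-composed with g).\<close>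
definition path_len_g :: "real^2^2 \<Rightarrow> piece list \<Rightarrow> real" where
  "path_len_g g cs = sum_list (map (\<lambda>c. norm (g *v (snd (snd c) - fst (snd c)))) cs)"

definition hat_dist_g :: "real^2^2 \<Rightarrow> sheet \<times> (real^2) \<Rightarrow> sheet \<times> (real^2) \<Rightarrow> real" where
  "hat_dist_g g x y = Inf (path_len_g g ` {cs. admissible cs x y})"

definition S_union :: "(real^2) set" where
  "S_union = (\<Union>n\<in>{1::nat..}. closed_segment (pt (4 * real n) 0) (pt (4 * real n + 1) 0))"

definition S'_union :: "(real^2) set" where
  "S'_union = (\<Union>n\<in>{1::nat..}. closed_segment (pt 0 (2 * real n)) (pt 1 (2 * real n)))"

end

theory Submission
  imports Defs
begin

lemma pt_1[simp]: "pt a b $ 1 = a" and pt_2[simp]: "pt a b $ 2 = b"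
  by (simp_all add: pt_def)

lemma pt_neq1: "a \<noteq> c \<Longrightarrow> pt a b \<noteq> pt c d"
  by (metis pt_1)

lemma pt_neq2: "b \<noteq> d \<Longrightarrow> pt a b \<noteq> pt c d"
  by (metis pt_2)

lemma pt_eq: "w = pt (w$1) (w$2)"
  by (simp add: vec_eq_iff forall_2)

lemma other_neq[simp]: "other s \<noteq> s" "s \<noteq> other s"
  by (cases s, auto)+

lemma seg_coord:
  fixes a b w :: "real^'n"
  assumes "w \<in> closed_segment a b"
  shows "\<exists>u. 0 \<le> u \<and> u \<le> 1 \<and> w$i = (1-u)*a$i + u*b$i"
proof -
  obtain u where u: "0 \<le> u" "u \<le> 1" "w = (1 - u) *\<^sub>R a + u *\<^sub>R b" using assms unfolding in_segment by auto
  have "w$i = (1-u)*a$i + u*b$i" using u(3) by simp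
  then show ?thesis using u by blast
qed

lemma oseg_coord:
  fixes a b w :: "real^'n"
  assumes "w \<in> open_segment a b"
  shows "\<exists>u. 0 < u \<and> u < 1 \<and> w$i = (1-u)*a$i + u*b$i"
proof -
  obtain u where u: "0 < u" "u < 1" "w = (1 - u) *\<^sub>R a + u *\<^sub>R b" using assms unfolding in_segment by auto
  have "w$i = (1-u)*a$i + u*b$i" using u(3) by simp
  then show ?thesis using u by blast
qed

lemma slit_height:
  assumes "w \<in> glue_slit s n"
  shows "w$2 = glue_height s n"
proof -
  obtain u where "w$2 = (1-u)*(glue_start s n)$2 + u*(glue_end s n)$2"
    using seg_coord[OF assms[unfolded glue_slit_def]] by blast
  then show ?thesis
    by (cases s) (auto simp: glue_start_def glue_end_def glue_height_def algebra_simps)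
qed

lemma slitE_coord:
  assumes "w \<in> glue_slit SE n"
  shows "w$2 = 0 \<and> 4*real n + 2 \<le> w$1 \<and> w$1 \<le> 4*real n + 3"
proof -
  obtain u where u: "0 \<le> u" "u \<le> 1" "w$1 = (1-u)*(glue_start SE n)$1 + u*(glue_end SE n)$1"
    using seg_coord[OF assms[unfolded glue_slit_def]] by blast
  then have "w$1 = 4*real n + 2 + u"
    by (simp add: glue_start_def glue_end_def algebra_simps)
  with u slit_height[OF assms] show ?thesis by (simp add: glue_height_def)
qed

lemma transfer_coord:
  assumes "b \<in> glue_slit SE n"
  shows "(transfer SE n b)$2 = 2*real n + 1 \<and> 0 \<le> (transfer SE n b)$1 \<and> (transfer SE n b)$1 \<le> 1"
  using slitE_coord[OF assms]
  by (simp add: transfer_def glue_start_def)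

lemma link_same:
  assumes "link c c'" "fst c' = fst c"
  shows "fst (snd c') = snd (snd c)"
  using assms unfolding link_def Let_def by auto

lemma link_switch:
  assumes "link c c'" "fst c' \<noteq> fst c"
  shows "\<exists>n\<ge>1. snd (snd c) \<in> glue_slit (fst c) n \<and>
      fst (snd c') = transfer (fst c) n (snd (snd c)) \<and> fst c' = other (fst c)"
proof -
  have sub: "glue_slit_open s n \<subseteq> glue_slit s n" for s n
    unfolding glue_slit_open_def glue_slit_def by (rule segment_open_subset_closed)
  have ends: "glue_start s n \<in> glue_slit s n" "glue_end s n \<in> glue_slit s n" for s n
    unfolding glue_slit_def by auto
  have "b \<in> glue_slit_open s n \<Longrightarrow> b \<in> glue_slit s n" for b s n using sub by blast
  then show ?thesis using assms ends unfolding link_def Let_def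
    by (elim disjE exE conjE; simp; metis)
qed

definition chain :: "piece list \<Rightarrow> bool" where
  "chain cs = (\<forall>i. Suc i < length cs \<longrightarrow> link (cs ! i) (cs ! Suc i))"

lemma chain_Cons2:
  assumes "chain (c # c' # rest)"
  shows "link c c'" "chain (c' # rest)"
proof -
  show "link c c'" using assms[unfolded chain_def, rule_format, of 0] by simp
  show "chain (c' # rest)" unfolding chain_def
  proof (intro allI impI)
    fix i assume "Suc i < length (c' # rest)"
    then show "link ((c' # rest) ! i) ((c' # rest) ! Suc i)"
      using assms[unfolded chain_def, rule_format, of "Suc i"] by simp
  qed
qed

lemma len_Cons: "path_len_g g (c # cs) = norm (g *v (snd (snd c) - fst (snd c))) + path_len_g g cs"
  by (simp add: path_len_g_def)

lemma len_nonneg: "path_len_g g cs \<ge> 0"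
  unfolding path_len_g_def by (induction cs) auto

lemma tri: "norm (g *v (b - a)) \<le> norm (g *v (m - a)) + norm (g *v (b - m))"
proof -
  have "g *v (b - a) = g *v (m - a) + g *v (b - m)"
  proof -
    have "b - a = (m - a) + (b - m)" by simp
    then show ?thesis by (metis matrix_vector_right_distrib)
  qed
  then show ?thesis by (metis norm_triangle_ineq)
qed

lemma claim2:
  "cs \<noteq> [] \<Longrightarrow> chain cs \<Longrightarrow> fst (last cs) = SE' \<Longrightarrow>
   (fst (hd cs) = SE' \<and> path_len_g g cs \<ge> norm (g *v (snd (snd (last cs)) - fst (snd (hd cs))))) \<or>
   (\<exists>c k. k \<ge> 1 \<and> c$2 = 2*real k + 1 \<and> 0 \<le> c$1 \<and> c$1 \<le> 1 \<and>
       path_len_g g cs \<ge> norm (g *v (snd (snd (last cs)) - c)))"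
proof (induction cs rule: induct_list012)
  case 1 then show ?case by simp
next
  case (2 x) then show ?case by (simp add: len_Cons path_len_g_def)
next
  case (3 x y zs)
  have lk: "link x y" and ch: "chain (y # zs)" using chain_Cons2[OF "3.prems"(2)] by auto
  have IH: "(fst y = SE' \<and> path_len_g g (y#zs) \<ge> norm (g *v (snd (snd (last (y#zs))) - fst (snd y)))) \<or>
   (\<exists>c k. k \<ge> 1 \<and> c$2 = 2*real k + 1 \<and> 0 \<le> c$1 \<and> c$1 \<le> 1 \<and>
       path_len_g g (y#zs) \<ge> norm (g *v (snd (snd (last (y#zs))) - c)))"
    using "3.IH"(2) ch "3.prems"(3) by simp
  have L: "path_len_g g (x#y#zs) = norm (g *v (snd (snd x) - fst (snd x))) + path_len_g g (y#zs)"
    by (rule len_Cons)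
  have Lge: "path_len_g g (x#y#zs) \<ge> path_len_g g (y#zs)" using L by simp
  show ?case
  proof (cases "fst y = SE' \<and> path_len_g g (y#zs) \<ge> norm (g *v (snd (snd (last (y#zs))) - fst (snd y)))")
    case True
    show ?thesis
    proof (cases "fst x = SE'")
      case True2: True
      then have "fst (snd y) = snd (snd x)" using link_same[OF lk] True by simp
      then have "path_len_g g (x#y#zs) \<ge> norm (g *v (snd (snd (last (y#zs))) - fst (snd x)))"
        using L True tri[of g "snd (snd (last (y#zs)))" "fst (snd x)" "snd (snd x)"] by simp
      then show ?thesis using True2 by simp
    next
      case False
      then have "fst x = SE" by (cases "fst x") auto
      then obtain n where n: "n \<ge> 1" "snd (snd x) \<in> glue_slit SE n"
          "fst (snd y) = transfer SE n (snd (snd x))"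
        using link_switch[OF lk] True by auto
      show ?thesis
        apply (rule disjI2)
        apply (rule exI[of _ "fst (snd y)"], rule exI[of _ n])
        using n transfer_coord[OF n(2)] True Lge by simp
    qed
  next
    case False
    then show ?thesis using IH Lge by force
  qed
qed

lemma claim1:
  "cs \<noteq> [] \<Longrightarrow> chain cs \<Longrightarrow> fst (hd cs) = SE \<Longrightarrow> fst (last cs) = SE' \<Longrightarrow>
   \<exists>b n c k. n \<ge> 1 \<and> b \<in> glue_slit SE n \<and> k \<ge> 1 \<and> c$2 = 2*real k + 1 \<and> 0 \<le> c$1 \<and> c$1 \<le> 1 \<and>
     path_len_g g cs \<ge> norm (g *v (b - fst (snd (hd cs)))) + norm (g *v (snd (snd (last cs)) - c))"
proof (induction cs rule: induct_list012)
  case 1 then show ?case by simp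
next
  case (2 x) then show ?case by simp
next
  case (3 x y zs)
  have lk: "link x y" and ch: "chain (y # zs)" using chain_Cons2[OF "3.prems"(2)] by auto
  have L: "path_len_g g (x#y#zs) = norm (g *v (snd (snd x) - fst (snd x))) + path_len_g g (y#zs)"
    by (rule len_Cons)
  show ?case
  proof (cases "fst y = SE")
    case True
    then have ab: "fst (snd y) = snd (snd x)" using link_same[OF lk] "3.prems"(3) by simp
    obtain b n c k where bn: "n \<ge> 1 \<and> b \<in> glue_slit SE n \<and> k \<ge> 1 \<and> c$2 = 2*real k + 1 \<and> 0 \<le> c$1 \<and> c$1 \<le> 1 \<and>
     path_len_g g (y#zs) \<ge> norm (g *v (b - fst (snd y))) + norm (g *v (snd (snd (last (y#zs))) - c))"
      using "3.IH"(2) ch True "3.prems"(4) by auto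
    show ?thesis
      apply (rule exI[of _ b], rule exI[of _ n], rule exI[of _ c], rule exI[of _ k])
      using bn L ab tri[of g b "fst (snd x)" "snd (snd x)"] by simp
  next
    case False
    then have "fst y \<noteq> fst x" using "3.prems"(3) by simp
    then obtain n where n: "n \<ge> 1" "snd (snd x) \<in> glue_slit SE n"
        "fst (snd y) = transfer SE n (snd (snd x))"
      using link_switch[OF lk] "3.prems"(3) by auto
    have yE: "fst y = SE'" using False by (cases "fst y") auto
    have C2: "(fst (hd (y#zs)) = SE' \<and> path_len_g g (y#zs) \<ge> norm (g *v (snd (snd (last (y#zs))) - fst (snd (hd (y#zs)))))) \<or>
       (\<exists>c k. k \<ge> 1 \<and> c$2 = 2*real k + 1 \<and> 0 \<le> c$1 \<and> c$1 \<le> 1 \<and>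
       path_len_g g (y#zs) \<ge> norm (g *v (snd (snd (last (y#zs))) - c)))"
      by (rule claim2) (use ch "3.prems"(4) in auto)
    then obtain c k where ck: "k \<ge> 1 \<and> c$2 = 2*real k + 1 \<and> 0 \<le> c$1 \<and> c$1 \<le> 1 \<and>
       path_len_g g (y#zs) \<ge> norm (g *v (snd (snd (last (y#zs))) - c))"
    proof
      assume "fst (hd (y#zs)) = SE' \<and> path_len_g g (y#zs) \<ge> norm (g *v (snd (snd (last (y#zs))) - fst (snd (hd (y#zs)))))"
      moreover note transfer_coord[OF n(2)]
      ultimately show ?thesis using that[of n "fst (snd y)"] n by simp
    qed (use that in blast)
    show ?thesis
      apply (rule exI[of _ "snd (snd x)"], rule exI[of _ n], rule exI[of _ c], rule exI[of _ k])
      using n ck L by simp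
  qed
qed


lemma S_coord:
  assumes "p \<in> S_union"
  shows "\<exists>n::nat. n \<ge> 1 \<and> p$2 = 0 \<and> 4*real n \<le> p$1 \<and> p$1 \<le> 4*real n + 1"
proof -
  obtain n :: nat where n: "n \<ge> 1" "p \<in> closed_segment (pt (4 * real n) 0) (pt (4 * real n + 1) 0)"
    using assms unfolding S_union_def by auto
  obtain u where u: "0 \<le> u" "u \<le> 1" "p$1 = (1-u)*(4*real n) + u*(4*real n + 1)"
    using seg_coord[OF n(2), of 1] by auto
  obtain v where v: "p$2 = (1 - v) * 0 + v * 0"
    using seg_coord[OF n(2), of 2] by auto
  show ?thesis using n u v by (intro exI[of _ n]) (auto simp: algebra_simps)
qed

lemma S'_coord:
  assumes "q \<in> S'_union"
  shows "\<exists>m::nat. m \<ge> 1 \<and> q$2 = 2*real m \<and> 0 \<le> q$1 \<and> q$1 \<le> 1"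
proof -
  obtain n :: nat where n: "n \<ge> 1" "q \<in> closed_segment (pt 0 (2 * real n)) (pt 1 (2 * real n))"
    using assms unfolding S'_union_def by auto
  obtain u where u: "0 \<le> u" "u \<le> 1" "q$1 = (1 - u) * 0 + u * 1"
    using seg_coord[OF n(2), of 1] by auto
  obtain v where v: "q$2 = (1 - v) * (2*real n) + v * (2*real n)"
    using seg_coord[OF n(2), of 2] by auto
  show ?thesis using n u v by (intro exI[of _ n]) (auto simp: algebra_simps)
qed

lemma gdec: "g *v w = (w$1) *\<^sub>R (g *v pt 1 0) + (w$2) *\<^sub>R (g *v pt 0 1)"
proof -
  have "w = (w$1) *\<^sub>R pt 1 0 + (w$2) *\<^sub>R pt 0 1"
    by (simp add: vec_eq_iff forall_2)
  then have "g *v w = g *v ((w$1) *\<^sub>R pt 1 0 + (w$2) *\<^sub>R pt 0 1)" by simp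
  also have "\<dots> = (w$1) *\<^sub>R (g *v pt 1 0) + (w$2) *\<^sub>R (g *v pt 0 1)"
    by (simp add: matrix_vector_right_distrib matrix_vector_mult_scaleR)
  finally show ?thesis .
qed

lemma bound1:
  assumes "w$2 = 0" "\<bar>w$1\<bar> \<ge> 1"
  shows "norm (g *v w) \<ge> norm (g *v pt 1 0)"
proof -
  have "norm (g *v w) = \<bar>w$1\<bar> * norm (g *v pt 1 0)"
    using gdec[of g w] assms(1) by simp
  also have "\<dots> \<ge> norm (g *v pt 1 0)"
    using assms(2) by (simp add: mult_le_cancel_right1)
  finally show ?thesis .
qed

lemma bound2:
  assumes "\<bar>w$1\<bar> \<le> 1" "\<bar>w$2\<bar> \<ge> 1"
  shows "norm (g *v w) \<ge> norm (g *v pt 0 1) - norm (g *v pt 1 0)"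
proof -
  let ?A = "norm (g *v pt 1 0)" and ?B = "norm (g *v pt 0 1)"
  have "norm ((w$2) *\<^sub>R (g *v pt 0 1)) \<le> norm (g *v w) + norm ((w$1) *\<^sub>R (g *v pt 1 0))"
    using gdec[of g w] norm_triangle_ineq4[of "g *v w" "(w$1) *\<^sub>R (g *v pt 1 0)"] by simp
  then have "\<bar>w$2\<bar> * ?B \<le> norm (g *v w) + \<bar>w$1\<bar> * ?A" by simp
  moreover have "?B \<le> \<bar>w$2\<bar> * ?B" using assms(2) by (simp add: mult_le_cancel_right1)
  moreover have "\<bar>w$1\<bar> * ?A \<le> ?A" using assms(1) by (simp add: mult_left_le_one_le)
  ultimately show ?thesis by linarith
qed

lemma cs2: "((a::real)*A + b*B)^2 \<le> (A^2 + B^2) * (a^2 + b^2)"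
proof -
  have "0 \<le> (a * B - b * A)^2" by simp
  then show ?thesis by (simp add: power2_eq_square algebra_simps)
qed

lemma onorm_bound:
  "onorm (\<lambda>x. g *v x) \<le> sqrt ((norm (g *v pt 1 0))^2 + (norm (g *v pt 0 1))^2)"
proof (rule onorm_le)
  fix x :: "real^2"
  let ?A = "norm (g *v pt 1 0)" and ?B = "norm (g *v pt 0 1)"
  have nx: "norm x = sqrt ((x$1)^2 + (x$2)^2)"
    by (simp add: norm_vec_def L2_set_def sum_2)
  have "norm (g *v x) \<le> \<bar>x$1\<bar> * ?A + \<bar>x$2\<bar> * ?B"
    using gdec[of g x] norm_triangle_ineq[of "(x$1) *\<^sub>R (g *v pt 1 0)" "(x$2) *\<^sub>R (g *v pt 0 1)"] by simp
  also have "\<dots> \<le> sqrt (?A^2 + ?B^2) * sqrt ((x$1)^2 + (x$2)^2)"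
  proof -
    have "(\<bar>x$1\<bar> * ?A + \<bar>x$2\<bar> * ?B)^2 \<le> (?A^2 + ?B^2) * ((x$1)^2 + (x$2)^2)"
    proof -
      have "(\<bar>x$1\<bar> * ?A + \<bar>x$2\<bar> * ?B)^2 \<le> (?A^2 + ?B^2) * (\<bar>x$1\<bar>^2 + \<bar>x$2\<bar>^2)"
        by (rule cs2)
      then show ?thesis by simp
    qed
    then have "\<bar>x$1\<bar> * ?A + \<bar>x$2\<bar> * ?B \<le> sqrt ((?A^2 + ?B^2) * ((x$1)^2 + (x$2)^2))"
      by (rule real_le_rsqrt)
    then show ?thesis by (simp add: real_sqrt_mult)
  qed
  finally show "norm (g *v x) \<le> sqrt (?A^2 + ?B^2) * norm x" using nx by simp
qed

lemma path_bound:
  assumes adm: "admissible cs (SE, p) (SE', q)" and p: "p \<in> S_union" and q: "q \<in> S'_union"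
    and g: "onorm (\<lambda>x. g *v x) \<ge> 1"
  shows "path_len_g g cs \<ge> 1 / sqrt 2"
proof -
  let ?A = "norm (g *v pt 1 0)" and ?B = "norm (g *v pt 0 1)"
  have ch: "chain cs" using adm unfolding admissible_def chain_def by auto
  obtain b n c k where bc: "n \<ge> 1" "b \<in> glue_slit SE n" "k \<ge> 1" "c$2 = 2*real k + 1" "0 \<le> c$1" "c$1 \<le> 1"
     "path_len_g g cs \<ge> norm (g *v (b - p)) + norm (g *v (q - c))"
    using claim1[of cs g] ch adm unfolding admissible_def by auto
  obtain np :: nat where np: "np \<ge> 1" "p$2 = 0" "4*real np \<le> p$1" "p$1 \<le> 4*real np + 1"
    using S_coord[OF p] by auto
  obtain m :: nat where m: "m \<ge> 1" "q$2 = 2*real m" "0 \<le> q$1" "q$1 \<le> 1"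
    using S'_coord[OF q] by auto
  have b: "b$2 = 0" "4*real n + 2 \<le> b$1" "b$1 \<le> 4*real n + 3" using slitE_coord[OF bc(2)] by auto
  have d1: "\<bar>(b - p)$1\<bar> \<ge> 1"
  proof (cases "n \<ge> np")
    case True then have "real n \<ge> real np" by simp
    then show ?thesis using b np by simp
  next
    case False then have "real n + 1 \<le> real np" by linarith
    then show ?thesis using b np by simp
  qed
  have d2: "\<bar>(q - c)$2\<bar> \<ge> 1"
  proof (cases "m \<ge> k + 1")
    case True then have "real m \<ge> real k + 1" by linarith
    then show ?thesis using m bc by simp
  next
    case False then have "real m \<le> real k" by linarith
    then show ?thesis using m bc by simp
  qed
  have d3: "\<bar>(q - c)$1\<bar> \<le> 1" using m bc by simp
  have t1: "norm (g *v (b - p)) \<ge> ?A" by (rule bound1) (use b np d1 in auto)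
  have t2: "norm (g *v (q - c)) \<ge> ?B - ?A" by (rule bound2) (use d2 d3 in auto)
  have LA: "path_len_g g cs \<ge> ?A" using t1 bc(7) norm_ge_zero[of "g *v (q - c)"] by linarith
  have LB: "path_len_g g cs \<ge> ?B" using t1 t2 bc(7) by linarith
  have "1 \<le> sqrt (?A^2 + ?B^2)" using g onorm_bound[of g] by linarith
  then have AB: "1 \<le> ?A^2 + ?B^2"
    by (metis real_sqrt_le_iff real_sqrt_one)
  have "1 / sqrt 2 = sqrt (1/2)" by (simp add: real_sqrt_divide)
  also have "\<dots> \<le> max ?A ?B"
  proof (rule real_le_lsqrt)
    show "0 \<le> max ?A ?B" by (simp add: le_max_iff_disj)
    show "1/2 \<le> (max ?A ?B)^2"
    proof (cases "?A \<le> ?B")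
      case True
      then have h: "?A^2 \<le> ?B^2" by (simp add: power_mono)
      have "max ?A ?B = ?B" using True by simp
      then have "(max ?A ?B)^2 = ?B^2" by simp
      then show ?thesis using AB h by linarith
    next
      case False
      then have h: "?B^2 \<le> ?A^2" by (simp add: power_mono)
      have "max ?A ?B = ?A" using False by simp
      then have "(max ?A ?B)^2 = ?A^2" by simp
      then show ?thesis using AB h by linarith
    qed
  qed
  finally show ?thesis using LA LB by linarith
qed


lemma piece_ok_height:
  assumes "a \<noteq> b" "\<And>u n. u \<in> open_segment a b \<Longrightarrow> n \<ge> 1 \<Longrightarrow> u$2 \<noteq> glue_height s n"
  shows "piece_ok (s, a, b)"
  unfolding piece_ok_def Let_def using assms slit_height by fastforce

lemma not_in_slit:
  assumes "w$2 \<noteq> glue_height s n"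
  shows "w \<notin> glue_slit s n"
  using assms slit_height by blast

lemma exists_path:
  assumes p: "p \<in> S_union" and q: "q \<in> S'_union"
  shows "\<exists>cs. admissible cs (SE, p) (SE', q)"
proof -
  obtain np :: nat where np: "np \<ge> 1" "p$2 = 0" "4*real np \<le> p$1" "p$1 \<le> 4*real np + 1"
    using S_coord[OF p] by auto
  obtain m :: nat where m: "m \<ge> 1" "q$2 = 2*real m" "0 \<le> q$1" "q$1 \<le> 1"
    using S'_coord[OF q] by auto
  define x where "x = p$1"
  define y where "y = q$1"
  have pe: "p = pt x 0" using np(2) x_def by (simp add: vec_eq_iff forall_2)
  have qe: "q = pt y (2*real m)" using m(2) y_def by (simp add: vec_eq_iff forall_2)
  have hE: "glue_height SE n = 0" for n by (simp add: glue_height_def)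
  have hE': "glue_height SE' n = 2*real n + 1" for n by (simp add: glue_height_def)
  have xne: "x \<noteq> 4*real m + 2"
  proof
    assume h: "x = 4*real m + 2"
    show False
    proof (cases "m \<ge> np")
      case True then have "real m \<ge> real np" by simp
      then show False using h np x_def by linarith
    next
      case False then have "real m + 1 \<le> real np" by linarith
      then show False using h np x_def by linarith
    qed
  qed
  define c1 :: piece where "c1 = (SE, pt x 0, pt x (-1))"
  define c2 :: piece where "c2 = (SE, pt x (-1), pt (4*real m+2) (-1))"
  define c3 :: piece where "c3 = (SE, pt (4*real m+2) (-1), pt (4*real m+2) 0)"
  define c4 :: piece where "c4 = (SE', pt 0 (2*real m+1), pt y (2*real m))"
  have ok1: "piece_ok c1" unfolding c1_def
  proof (rule piece_ok_height)
    show "pt x 0 \<noteq> pt x (-1)" by (rule pt_neq2) simp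
    fix u n assume uu: "u \<in> open_segment (pt x 0) (pt x (-1))"
    obtain t where "0 < t" "t < 1" "u$2 = (1-t)*0 + t*(-1)" using oseg_coord[OF uu, of 2] by auto
    then show "u$2 \<noteq> glue_height SE n" using hE by simp
  qed
  have ok2: "piece_ok c2" unfolding c2_def
  proof (rule piece_ok_height)
    show "pt x (-1) \<noteq> pt (4*real m+2) (-1)" using xne by (rule pt_neq1)
    fix u n assume uu: "u \<in> open_segment (pt x (-1)) (pt (4*real m+2) (-1))"
    obtain t where "u$2 = (1-t)*(-1) + t*(-1)" using oseg_coord[OF uu, of 2] by auto
    then show "u$2 \<noteq> glue_height SE n" using hE by (simp add: algebra_simps)
  qed
  have ok3: "piece_ok c3" unfolding c3_def
  proof (rule piece_ok_height)
    show "pt (4*real m+2) (-1) \<noteq> pt (4*real m+2) 0" by (rule pt_neq2) simp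
    fix u n assume uu: "u \<in> open_segment (pt (4*real m+2) (-1)) (pt (4*real m+2) 0)"
    obtain t where "0 < t" "t < 1" "u$2 = (1-t)*(-1) + t*0" using oseg_coord[OF uu, of 2] by auto
    then show "u$2 \<noteq> glue_height SE n" using hE by simp
  qed
  have ok4: "piece_ok c4" unfolding c4_def
  proof (rule piece_ok_height)
    show "pt 0 (2*real m+1) \<noteq> pt y (2*real m)" by (rule pt_neq2) simp
    fix u n assume u: "u \<in> open_segment (pt 0 (2*real m+1)) (pt y (2*real m))" and n: "(n::nat) \<ge> 1"
    obtain t where t: "0 < t" "t < 1" "u$2 = (1-t)*(2*real m+1) + t*(2*real m)"
      using oseg_coord[OF u, of 2] by auto
    then have u2: "u$2 = 2*real m + 1 - t" by (simp add: algebra_simps)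
    show "u$2 \<noteq> glue_height SE' n"
    proof (cases "n \<ge> m")
      case True then have "real n \<ge> real m" by simp
      then show ?thesis unfolding hE' using u2 t by linarith
    next
      case False then have "real n + 1 \<le> real m" by linarith
      then show ?thesis unfolding hE' using u2 t by linarith
    qed
  qed
  have l12: "link c1 c2" unfolding link_def Let_def c1_def c2_def
    using not_in_slit[of "pt x (-1)" SE] hE by simp
  have l23: "link c2 c3" unfolding link_def Let_def c2_def c3_def
    using not_in_slit[of "pt (4*real m+2) (-1)" SE] hE by simp
  have l34: "link c3 c4" unfolding link_def Let_def c3_def c4_def
    apply (rule disjI2, rule disjI1)
    apply (rule exI[of _ m])
    using m by (simp add: transfer_def glue_start_def)
  have lk: "\<forall>i. Suc i < length [c1, c2, c3, c4] \<longrightarrow> link ([c1, c2, c3, c4] ! i) ([c1, c2, c3, c4] ! Suc i)"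
  proof (intro allI impI)
    fix i assume "Suc i < length [c1, c2, c3, c4]"
    then have "i = 0 \<or> i = 1 \<or> i = 2" by auto
    then show "link ([c1, c2, c3, c4] ! i) ([c1, c2, c3, c4] ! Suc i)"
      using l12 l23 l34 by auto
  qed
  have ok: "\<forall>c\<in>set [c1, c2, c3, c4]. piece_ok c" using ok1 ok2 ok3 ok4 by simp
  have e1: "fst (hd [c1, c2, c3, c4]) = fst (SE, p)" "fst (snd (hd [c1, c2, c3, c4])) = snd (SE, p)"
    unfolding c1_def using pe by simp_all
  have e2: "fst (last [c1, c2, c3, c4]) = fst (SE', q)" "snd (snd (last [c1, c2, c3, c4])) = snd (SE', q)"
    unfolding c4_def using qe by simp_all
  have "admissible [c1, c2, c3, c4] (SE, p) (SE', q)"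
    unfolding admissible_def using lk ok e1 e2 by blast
  then show ?thesis by blast
qed

theorem lemma4p5:
  fixes g :: "real^2^2"
  assumes "det g > 0"
    and "onorm (\<lambda>x. g *v x) \<ge> 1"
  shows "Inf {hat_dist_g g (SE, p) (SE', q) | p q. p \<in> S_union \<and> q \<in> S'_union} \<ge> 1 / sqrt 2"
proof (rule cInf_greatest)
  have "pt 4 0 \<in> S_union" unfolding S_union_def
    by (rule UN_I[of 1]) (auto intro: ends_in_segment)
  moreover have "pt 0 2 \<in> S'_union" unfolding S'_union_def
    by (rule UN_I[of 1]) (auto intro: ends_in_segment)
  ultimately show "{hat_dist_g g (SE, p) (SE', q) | p q. p \<in> S_union \<and> q \<in> S'_union} \<noteq> {}" by blast
next
  fix d assume "d \<in> {hat_dist_g g (SE, p) (SE', q) | p q. p \<in> S_union \<and> q \<in> S'_union}"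
  then obtain p q where d: "d = hat_dist_g g (SE, p) (SE', q)" and p: "p \<in> S_union" and q: "q \<in> S'_union"
    by blast
  show "1 / sqrt 2 \<le> d" unfolding d hat_dist_g_def
  proof (rule cInf_greatest)
    show "path_len_g g ` {cs. admissible cs (SE, p) (SE', q)} \<noteq> {}"
      using exists_path[OF p q] by blast
  next
    fix l assume "l \<in> path_len_g g ` {cs. admissible cs (SE, p) (SE', q)}"
    then show "1 / sqrt 2 \<le> l" using path_bound[OF _ p q assms(2)] by blast
  qed
qed

end
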